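(* Let $s\colon\mathbb{R}\to[0,\infty)$ be convex and lower semi-continuous with $s(0)=0$, and let $\kappa,\alpha>0$. Suppose there exist $b,c>0$ such that for all $x\in\mathbb{R}$: $$|x|\le \min\big(\operatorname{prox}_{\alpha s}^{-1}(c\kappa)\big)\ \Longrightarrow\ |\operatorname{prox}_{\alpha s}(x)|\le \frac{\kappa^2}{\kappa^2+\alpha b}|x|.$$ Then for all $y\in\mathbb{R}$: if $|y|\le c\kappa$ then $s(y)\ge \frac b2\,|y/\kappa|^2$; and if $|y|>c\kappa$ then $s(y)\ge bc\,|y/\kappa|-\frac{bc^2}{2}$.
   Context: For a proper convex lower semi-continuous $f\colon\mathbb{R}\to\mathbb{R}\cup\{\infty\}$, $\operatorname{prox}_f(x)=\operatorname{argmin}_{y\in\mathbb{R}}\tfrac12|x-y|^2+f(y)$; one has $\operatorname{prox}_f=(\mathrm{id}+\partial f)^{-1}$. $\operatorname{prox}_{\alpha s}^{-1}(c\kappa)=\{x:\operatorname{prox}_{\alpha s}(x)=c\kappa\}$ is a closed interval, and $\min$ of it denotes its smallest element (infimum). *)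

theory Defs
  imports "HOL-Analysis.Analysis"
begin

definition lsc_real :: "(real \<Rightarrow> real) \<Rightarrow> bool" where
  "lsc_real f \<longleftrightarrow> (\<forall>t. closed {x. f x \<le> t})"

text \<open>Proximal operator: the (unique, for proper convex lsc f) minimiser of
  1/2 |x - y|^2 + f y over y.\<close>
definition prox :: "(real \<Rightarrow> real) \<Rightarrow> real \<Rightarrow> real" where
  "prox f x = (THE y. \<forall>z. (1/2) * (x - y)^2 + f y \<le> (1/2) * (x - z)^2 + f z)"

end

theory Submission
  imports Defs
begin

locale pxs =
  fixes f :: "real \<Rightarrow> real"
  assumes nonneg: "\<And>x. f x \<ge> 0" and cvx: "convex_on UNIV f"
begin

lemma cont: "continuous_on UNIV f"
  by (rule convex_on_continuous[OF open_UNIV cvx])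

lemma cvx': "0 \<le> t \<Longrightarrow> t \<le> 1 \<Longrightarrow> f ((1 - t) * a + t * b) \<le> (1 - t) * f a + t * f b"
  using convex_onD[OF cvx, of t a b] by simp

lemma ex_min: "\<exists>y. \<forall>z. (1/2) * (x - y)^2 + f y \<le> (1/2) * (x - z)^2 + f z"
proof -
  define R where "R = 2 * f x + 1"
  have R1: "R \<ge> 1" using nonneg[of x] by (simp add: R_def)
  have "continuous_on (cball x R) (\<lambda>y. (1/2) * (x - y)^2 + f y)"
    by (intro continuous_intros continuous_on_subset[OF cont]) auto
  then obtain y where y: "y \<in> cball x R" "\<forall>z\<in>cball x R. (1/2) * (x - y)^2 + f y \<le> (1/2) * (x - z)^2 + f z"
    using continuous_attains_inf[of "cball x R"] R1 by fastforce
  have "(1/2) * (x - y)^2 + f y \<le> (1/2) * (x - z)^2 + f z" for z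
  proof (cases "z \<in> cball x R")
    case True then show ?thesis using y by blast
  next
    case False
    then have "\<bar>x - z\<bar> > R" by (simp add: dist_real_def)
    then have "R^2 < \<bar>x - z\<bar>^2" using R1 power_strict_mono[of R "\<bar>x - z\<bar>" 2] by simp
    then have "(x - z)^2 > R^2" by simp
    moreover have "R^2 \<ge> R" using R1 by (simp add: power2_eq_square)
    moreover have "(1/2) * (x - y)^2 + f y \<le> (1/2) * (x - x)^2 + f x" using y(2)[rule_format, of x] R1 by simp
    ultimately show ?thesis using nonneg[of z] by (simp add: R_def)
  qed
  then show ?thesis by blast
qed

lemma uniq:
  assumes "\<forall>z. (1/2) * (x - y1)^2 + f y1 \<le> (1/2) * (x - z)^2 + f z"
    and "\<forall>z. (1/2) * (x - y2)^2 + f y2 \<le> (1/2) * (x - z)^2 + f z"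
  shows "y1 = y2"
proof (rule ccontr)
  assume ne: "y1 \<noteq> y2"
  define m where "m = (1/2) * y1 + (1/2) * y2"
  have c: "f m \<le> (1 - 1/2) * f y1 + (1/2) * f y2" unfolding m_def
    using cvx'[of "1/2" y1 y2] by simp
  have e1: "(1/2) * (x - y1)^2 + f y1 \<le> (1/2) * (x - m)^2 + f m" using assms(1) by blast
  have e2: "(1/2) * (x - y2)^2 + f y2 \<le> (1/2) * (x - m)^2 + f m" using assms(2) by blast
  have "(y1 - y2)^2 > 0" using ne by simp
  have "(x - m)^2 = ((x - y1)^2 + (x - y2)^2)/2 - (y1 - y2)^2/4"
    unfolding m_def by (simp add: power2_eq_square field_simps)
  then show False using c e1 e2 \<open>(y1 - y2)^2 > 0\<close> by (simp add: field_simps)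
qed

lemma prox_min: "\<forall>z. (1/2) * (x - prox f x)^2 + f (prox f x) \<le> (1/2) * (x - z)^2 + f z"
proof -
  obtain y where y: "\<forall>z. (1/2) * (x - y)^2 + f y \<le> (1/2) * (x - z)^2 + f z" using ex_min by blast
  have "prox f x = y" unfolding prox_def
    apply (rule the_equality) using y apply blast using uniq y by blast
  then show ?thesis using y by simp
qed

lemma prox_eq: "\<forall>z. (1/2) * (x - y)^2 + f y \<le> (1/2) * (x - z)^2 + f z \<Longrightarrow> prox f x = y"
  using uniq prox_min by blast

lemma lim0: fixes A B :: real assumes "\<And>t. 0 < t \<Longrightarrow> t \<le> 1 \<Longrightarrow> A \<le> t * B" "B \<ge> 0" shows "A \<le> 0"
proof (rule ccontr)
  assume "\<not> A \<le> 0"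
  then have A: "A > 0" by simp
  define t where "t = A / (2 * B + 2 * A)"
  have t: "0 < t" "t \<le> 1" using A assms(2) by (auto simp: t_def field_simps)
  have "0 < A*B + A*(A*2)" using A assms(2) by (simp add: add_nonneg_pos)
  then have "t * B < A" using A assms(2) by (simp add: t_def field_simps)
  then show False using assms(1)[OF t] by simp
qed

lemma prox_sub: "f z - f (prox f x) \<ge> (x - prox f x) * (z - prox f x)"
proof -
  define y where "y = prox f x"
  have key: "f y - f z + (x - y) * (z - y) \<le> t * ((z - y)^2 / 2)" if t: "0 < t" "t \<le> 1" for t
  proof -
    define w where "w = (1 - t) * y + t * z"
    have "(1/2) * (x - y)^2 + f y \<le> (1/2) * (x - w)^2 + f w" using prox_min y_def by blast
    moreover have "f w \<le> (1 - t) * f y + t * f z" unfolding w_def using cvx' t by simp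
    then have "f w \<le> f y - t * f y + t * f z" by (simp add: algebra_simps)
    moreover have "(x - w)^2 = (x - y)^2 - 2 * (t * ((x - y) * (z - y))) + t^2 * (z - y)^2"
      unfolding w_def by (simp add: power2_eq_square algebra_simps)
    ultimately have h: "t * f y - t * f z + t * ((x - y) * (z - y)) \<le> t^2 * (z - y)^2 / 2"
      by (simp add: field_simps)
    have "t * (f y - f z + (x - y) * (z - y)) \<le> t * (t * ((z - y)^2 / 2))"
      using h by (simp add: algebra_simps power2_eq_square)
    then show ?thesis using t by simp
  qed
  have "f y - f z + (x - y) * (z - y) \<le> 0" by (rule lim0[OF key]) auto
  then show ?thesis unfolding y_def by simp
qed

lemma prox_ne: "(prox f b - prox f a)^2 \<le> (b - a) * (prox f b - prox f a)"
  using prox_sub[where z="prox f b" and x=a] prox_sub[where z="prox f a" and x=b]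
  by (simp add: power2_eq_square algebra_simps)

lemma prox_mono: "a \<le> b \<Longrightarrow> prox f a \<le> prox f b"
proof (rule ccontr)
  assume ab: "a \<le> b" and "\<not> prox f a \<le> prox f b"
  then have lt: "prox f b - prox f a < 0" by simp
  then have "(b - a) * (prox f b - prox f a) \<le> 0" using ab by (simp add: mult_nonneg_nonpos)
  moreover have "(prox f b - prox f a)^2 > 0" using lt by simp
  ultimately show False using prox_ne[of b a] by linarith
qed

lemma prox_lip: "\<bar>prox f b - prox f a\<bar> \<le> \<bar>b - a\<bar>"
proof -
  have "\<bar>prox f b - prox f a\<bar>^2 \<le> \<bar>b - a\<bar> * \<bar>prox f b - prox f a\<bar>"
    using prox_ne[of b a] by (simp add: abs_mult[symmetric])
  then show ?thesis 
  proof (cases "\<bar>prox f b - prox f a\<bar> = 0")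
    case False
    then have "\<bar>prox f b - prox f a\<bar> > 0" by simp
    moreover have "\<bar>prox f b - prox f a\<bar> * \<bar>prox f b - prox f a\<bar> \<le> \<bar>b - a\<bar> * \<bar>prox f b - prox f a\<bar>"
      using \<open>\<bar>prox f b - prox f a\<bar>^2 \<le> \<bar>b - a\<bar> * \<bar>prox f b - prox f a\<bar>\<close>
      by (simp add: power2_eq_square)
    ultimately show ?thesis using mult_right_le_imp_le by blast
  qed simp
qed

lemma prox_cont: "continuous_on A (prox f)"
  unfolding continuous_on_iff dist_real_def
  by (metis prox_lip order_le_less_trans)

lemma prox_upper: "x > M + f (M + 1) + 1 \<Longrightarrow> prox f x > M"
proof (rule ccontr)
  assume x: "x > M + f (M + 1) + 1" and "\<not> prox f x > M"
  then have y: "prox f x \<le> M" by simp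
  have "f (M+1) - f (prox f x) \<ge> (x - prox f x) * (M + 1 - prox f x)" by (rule prox_sub)
  moreover have "(x - prox f x) * (M + 1 - prox f x) \<ge> (x - prox f x)"
    using x y nonneg[of "M+1"] mult_left_mono[of 1 "M + 1 - prox f x" "x - prox f x"] by simp
  ultimately show False using x y nonneg[of "prox f x"] by linarith
qed

lemma prox_lower: "x < M - f (M - 1) - 1 \<Longrightarrow> prox f x < M"
proof (rule ccontr)
  assume x: "x < M - f (M - 1) - 1" and "\<not> prox f x < M"
  then have y: "prox f x \<ge> M" by simp
  have "f (M-1) - f (prox f x) \<ge> (x - prox f x) * (M - 1 - prox f x)" by (rule prox_sub)
  moreover have "(x - prox f x) * (M - 1 - prox f x) \<ge> (prox f x - x)"
  proof -
    have "(x - prox f x) * (M - 1 - prox f x) = (prox f x - x) * (prox f x - M + 1)" by algebra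
    also have "\<dots> \<ge> (prox f x - x)"
      using x y nonneg[of "M-1"] mult_left_mono[of 1 "prox f x - M + 1" "prox f x - x"] by simp
    finally show ?thesis .
  qed
  ultimately show False using x y nonneg[of "prox f x"] by linarith
qed

lemma prox_surj: "\<exists>x. prox f x = y"
proof -
  define a where "a = y - f (y - 1) - 2"
  define c where "c = y + f (y + 1) + 2"
  have "prox f a < y" by (rule prox_lower) (simp add: a_def)
  moreover have "prox f c > y" by (rule prox_upper) (simp add: c_def)
  moreover have "a \<le> c" using nonneg[of "y-1"] nonneg[of "y+1"] by (simp add: a_def c_def)
  ultimately show ?thesis using IVT'[of "prox f" a y c] prox_cont by fastforce
qed

lemma prox0: "f 0 = 0 \<Longrightarrow> prox f 0 = 0"
  by (rule prox_eq) (use nonneg in auto)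

end

lemma aux: "(N::real) > 0 \<Longrightarrow> (u - u*N/(N+1))^2 + (u*N/(N+1))^2/N = u^2/(N+1)"
proof -
  assume N: "N > 0"
  have "u - u*N/(N+1) = u/(N+1)" using N by (simp add: field_simps)
  then have 1: "(u - u*N/(N+1))^2 = u^2/(N+1)^2" by (simp add: power_divide)
  have 2: "(u*N/(N+1))^2/N = u^2*N/(N+1)^2" using N by (simp add: power_divide power_mult_distrib power2_eq_square)
  have 3: "u^2/(N+1)^2 + u^2*N/(N+1)^2 = u^2*(N+1)/(N+1)^2" by (simp add: add_divide_distrib[symmetric] algebra_simps)
  have 4: "u^2*(N+1)/(N+1)^2 = u^2/(N+1)" using N by (simp add: power2_eq_square)
  show ?thesis using 1 2 3 4 by simp
qed

theorem lemma2p3: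
  fixes s :: "real \<Rightarrow> real" and \<kappa> \<alpha> b c :: real
  assumes s_nonneg: "\<And>x. s x \<ge> 0"
    and s_convex: "convex_on UNIV s"
    and s_lsc: "lsc_real s"
    and s0: "s 0 = 0"
    and kappa_pos: "\<kappa> > 0" and alpha_pos: "\<alpha> > 0"
    and b_pos: "b > 0" and c_pos: "c > 0"
    and hyp: "\<And>x. \<bar>x\<bar> \<le> Inf {z. prox (\<lambda>y. \<alpha> * s y) z = c * \<kappa>} \<Longrightarrow>
                 \<bar>prox (\<lambda>y. \<alpha> * s y) x\<bar> \<le> \<kappa>^2 / (\<kappa>^2 + \<alpha> * b) * \<bar>x\<bar>"
  shows "\<forall>y. (\<bar>y\<bar> \<le> c * \<kappa> \<longrightarrow> s y \<ge> b / 2 * \<bar>y / \<kappa>\<bar>^2) \<and>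
             (\<bar>y\<bar> > c * \<kappa> \<longrightarrow> s y \<ge> b * c * \<bar>y / \<kappa>\<bar> - b * c^2 / 2)"
proof -
  define f where "f = (\<lambda>y. \<alpha> * s y)"
  interpret P: pxs f
    by unfold_locales (use s_nonneg alpha_pos s_convex in \<open>auto simp: f_def intro!: convex_on_cmul\<close>)
  define P where "P = prox f"
  define k where "k = \<kappa>^2 / (\<kappa>^2 + \<alpha> * b)"
  define q where "q = b / \<kappa>^2"
  have kpos: "k > 0" using kappa_pos alpha_pos b_pos by (simp add: k_def divide_pos_pos add_pos_pos)
  have q_pos: "q > 0" using kappa_pos b_pos by (simp add: q_def)
  have den: "\<kappa>^2 + \<alpha> * b > 0" using kappa_pos alpha_pos b_pos by (simp add: add_pos_pos)
  have hyp': "\<And>x. \<bar>x\<bar> \<le> Inf {z. P z = c * \<kappa>} \<Longrightarrow> \<bar>P x\<bar> \<le> k * \<bar>x\<bar>"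
    using hyp unfolding P_def f_def k_def by blast
  have sub: "\<And>x z. s z \<ge> s (P x) + ((x - P x) / \<alpha>) * (z - P x)"
  proof -
    fix x z
    have "\<alpha> * s z - \<alpha> * s (P x) \<ge> (x - P x) * (z - P x)"
      using P.prox_sub[of x z] unfolding P_def f_def by simp
    then show "s z \<ge> s (P x) + ((x - P x) / \<alpha>) * (z - P x)"
      using alpha_pos by (simp add: field_simps)
  qed
  have P0: "P 0 = 0" unfolding P_def by (rule P.prox0) (simp add: f_def s0)
  define S where "S = {z. P z = c * \<kappa>}"
  define x0 where "x0 = Inf S"
  have cpos: "c * \<kappa> > 0" using c_pos kappa_pos by simp
  have Sne: "S \<noteq> {}" using P.prox_surj[of "c * \<kappa>"] unfolding S_def P_def by auto
  have Slow: "z \<ge> c * \<kappa>" if "z \<in> S" for z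
  proof -
    have Pz: "P z = c * \<kappa>" using that S_def by simp
    have "s 0 \<ge> s (c * \<kappa>) + ((z - c * \<kappa>) / \<alpha>) * (0 - c * \<kappa>)" using sub[of z 0] Pz by simp
    then have "((z - c * \<kappa>) / \<alpha>) * (c * \<kappa>) \<ge> 0" using s0 s_nonneg[of "c * \<kappa>"] by simp
    then have "(z - c * \<kappa>) * (c * \<kappa>) \<ge> 0" using alpha_pos by (simp add: zero_le_divide_iff)
    then show ?thesis using cpos by (simp add: zero_le_mult_iff)
  qed
  have Sbdd: "bdd_below S" unfolding bdd_below_def using Slow by blast
  have Scl: "closed S" unfolding S_def P_def
    by (rule closed_Collect_eq) (auto intro: P.prox_cont)
  have x0S: "x0 \<in> S" unfolding x0_def using closed_contains_Inf[OF Sne Sbdd Scl] .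
  have x0ge: "x0 \<ge> c * \<kappa>" using Slow[OF x0S] .
  have ckx0: "c * \<kappa> \<le> k * x0"
    using hyp'[of x0] x0S x0ge cpos unfolding x0_def S_def by simp
  have SG: "\<exists>g. (\<forall>z. s z \<ge> s y + g * (z - y)) \<and> (y > 0 \<longrightarrow> g \<ge> q * y) \<and> (y < 0 \<longrightarrow> g \<le> q * y) \<and> (y = 0 \<longrightarrow> g = 0)"
    if yb: "\<bar>y\<bar> \<le> c * \<kappa>" for y
  proof (cases "y = 0")
    case True
    then show ?thesis using s0 s_nonneg by (intro exI[of _ 0]) auto
  next
    case False
    obtain x where x: "P x = y" using P.prox_surj[of y] unfolding P_def by auto
    define g where "g = (x - y) / \<alpha>"
    have g1: "\<forall>z. s z \<ge> s y + g * (z - y)" using sub[of x] x g_def by simp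
    have yk: "\<bar>y\<bar> \<le> k * \<bar>x\<bar>"
    proof (cases "\<bar>x\<bar> \<le> x0")
      case True
      then show ?thesis using hyp'[of x] x unfolding x0_def S_def by simp
    next
      case False
      then have "k * x0 \<le> k * \<bar>x\<bar>" using kpos by simp
      then show ?thesis using ckx0 yb by linarith
    qed
    have keq: "k * (\<kappa>^2 + \<alpha> * b) = \<kappa>^2" using den
      by (simp add: k_def)
    have qk: "q * \<kappa>^2 = b" using kappa_pos by (simp add: q_def)
    have qa: "q * w * \<alpha> * \<kappa>^2 = w * (\<alpha> * b)" for w
      using qk by (metis mult.commute mult.left_commute)
    have "y > 0 \<longrightarrow> g \<ge> q * y"
    proof
      assume yp: "y > 0"
      have "x > 0"
      proof (rule ccontr)
        assume "\<not> x > 0"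
        then have "P x \<le> P 0" unfolding P_def by (intro P.prox_mono) simp
        then show False using x P0 yp by simp
      qed
      then have "y \<le> k * x" using yk yp by simp
      then have "y * (\<kappa>^2 + \<alpha> * b) \<le> k * x * (\<kappa>^2 + \<alpha> * b)"
        using den by (simp add: mult_right_mono)
      moreover have "k * x * (\<kappa>^2 + \<alpha> * b) = \<kappa>^2 * x" using keq by (metis mult.commute mult.left_commute)
      ultimately have "y * (\<kappa>^2 + \<alpha> * b) \<le> \<kappa>^2 * x" by simp
      then have "y * (\<alpha> * b) \<le> \<kappa>^2 * (x - y)" by (simp add: algebra_simps)
      then have "q * y * \<alpha> * \<kappa>^2 \<le> \<kappa>^2 * (x - y)" using qa[of y] by linarith
      then have "q * y * \<alpha> \<le> x - y" using kappa_pos by (metis mult.commute mult_le_cancel_left_pos zero_less_power)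
      then show "g \<ge> q * y" using alpha_pos by (simp add: g_def field_simps)
    qed
    moreover have "y < 0 \<longrightarrow> g \<le> q * y"
    proof
      assume yn: "y < 0"
      have "x < 0"
      proof (rule ccontr)
        assume "\<not> x < 0"
        then have "P 0 \<le> P x" unfolding P_def by (intro P.prox_mono) simp
        then show False using x P0 yn by simp
      qed
      then have "-y \<le> k * (-x)" using yk yn by simp
      then have "(-y) * (\<kappa>^2 + \<alpha> * b) \<le> k * (-x) * (\<kappa>^2 + \<alpha> * b)"
        using den by (simp only: mult_right_mono less_imp_le)
      moreover have "k * (-x) * (\<kappa>^2 + \<alpha> * b) = \<kappa>^2 * (-x)" using keq by (metis mult.commute mult.left_commute)
      ultimately have "(-y) * (\<kappa>^2 + \<alpha> * b) \<le> \<kappa>^2 * (-x)" by linarith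
      then have "(-y) * (\<alpha> * b) \<le> \<kappa>^2 * (y - x)" by (simp add: algebra_simps)
      then have "q * (-y) * \<alpha> * \<kappa>^2 \<le> \<kappa>^2 * (y - x)" using qa[of "-y"] by linarith
      then have "q * (-y) * \<alpha> \<le> y - x" using kappa_pos by (metis mult.commute mult_le_cancel_left_pos zero_less_power)
      then show "g \<le> q * y" using alpha_pos by (simp add: g_def field_simps)
    qed
    ultimately show ?thesis using g1 False by blast
  qed
  define h where "h = (\<lambda>v. s v - q / 2 * v^2)"
  have ST: "h t \<le> h u + q / 2 * (u - t)^2"
    if tu: "0 \<le> t \<and> t \<le> u \<or> u \<le> t \<and> t \<le> 0" and ub: "\<bar>u\<bar> \<le> c * \<kappa>" for t u
  proof -
    have tb: "\<bar>t\<bar> \<le> c * \<kappa>" using tu ub by linarith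
    obtain g where g: "\<forall>z. s z \<ge> s t + g * (z - t)" "t > 0 \<longrightarrow> g \<ge> q * t" "t < 0 \<longrightarrow> g \<le> q * t" "t = 0 \<longrightarrow> g = 0"
      using SG[OF tb] by blast
    have "g * (u - t) \<ge> q * t * (u - t)"
    proof (cases "t > 0")
      case True
      then show ?thesis using g(2) tu by (intro mult_right_mono) auto
    next
      case False
      show ?thesis
      proof (cases "t < 0")
        case True
        then show ?thesis using g(3) tu by (intro mult_right_mono_neg) auto
      next
        case False
        then show ?thesis using \<open>\<not> t > 0\<close> g(4) by simp
      qed
    qed
    then have "s u \<ge> s t + q * t * (u - t)" using g(1) by (meson order_trans add_left_mono)
    then show ?thesis unfolding h_def by (simp add: power2_eq_square algebra_simps)
  qed
  have h0: "h 0 = 0" by (simp add: h_def s0)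
  have IND: "\<forall>u. \<bar>u\<bar> \<le> c * \<kappa> \<longrightarrow> 0 \<le> h u + q / 2 * u^2 / (Suc m)" for m
  proof (induction m)
    case 0
    show ?case
    proof (intro allI impI)
      fix u assume ub: "\<bar>u\<bar> \<le> c * \<kappa>"
      have "0 \<le> (0::real) \<and> 0 \<le> u \<or> u \<le> 0 \<and> 0 \<le> (0::real)" by linarith
      from ST[OF this ub] h0 show "0 \<le> h u + q / 2 * u^2 / (Suc 0)" by simp
    qed
  next
    case (Suc m)
    show ?case
    proof (intro allI impI)
      fix u assume ub: "\<bar>u\<bar> \<le> c * \<kappa>"
      define v where "v = u * (m + 1) / (m + 2)"
      have vr: "0 \<le> v \<and> v \<le> u \<or> u \<le> v \<and> v \<le> 0"
        using mult_nonpos_nonneg[of u "real m"]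
        by (cases "u \<ge> 0") (auto simp: v_def field_simps mult_le_cancel_left1 mult_le_cancel_left2)
      then have vb: "\<bar>v\<bar> \<le> c * \<kappa>" using ub by linarith
      have i1: "0 \<le> h v + q / 2 * v^2 / (Suc m)" using Suc.IH vb by blast
      have i2: "h v \<le> h u + q / 2 * (u - v)^2" using ST[OF vr ub] .
      have eq: "(u - v)^2 + v^2 / (Suc m) = u^2 / (Suc (Suc m))"
        using aux[of "real m + 1" u] unfolding v_def by (simp add: add_ac)
      have "q / 2 * (u - v)^2 + q / 2 * v^2 / (Suc m) = q / 2 * ((u - v)^2 + v^2 / (Suc m))"
        by (simp add: ring_distribs)
      also have "\<dots> = q / 2 * (u^2 / (Suc (Suc m)))" unfolding eq by (rule refl)
      also have "\<dots> = q / 2 * u^2 / (Suc (Suc m))" by simp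
      finally have "q / 2 * (u - v)^2 + q / 2 * v^2 / (Suc m) = q / 2 * u^2 / (Suc (Suc m))" .
      then show "0 \<le> h u + q / 2 * u^2 / (Suc (Suc m))" using i1 i2 by linarith
    qed
  qed
  have hpos: "h u \<ge> 0" if ub: "\<bar>u\<bar> \<le> c * \<kappa>" for u
  proof (rule ccontr)
    assume "\<not> h u \<ge> 0"
    then have hn: "h u < 0" by simp
    obtain n where n: "q / 2 * u^2 / (- h u) < of_nat n" using reals_Archimedean2 by blast
    have "0 \<le> h u + q / 2 * u^2 / (Suc n)" using IND ub by blast
    moreover have "q / 2 * u^2 < (- h u) * Suc n" using n hn by (simp add: field_simps)
    then have "q / 2 * u^2 / (Suc n) < - h u" by (simp add: field_simps)
    ultimately show False by linarith
  qed
  have C1: "s y \<ge> b / 2 * \<bar>y / \<kappa>\<bar>^2" if "\<bar>y\<bar> \<le> c * \<kappa>" for y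
  proof -
    have "s y \<ge> q / 2 * y^2" using hpos[OF that] by (simp add: h_def)
    moreover have "b / 2 * \<bar>y / \<kappa>\<bar>^2 = q / 2 * y^2" by (simp add: q_def power_divide)
    ultimately show ?thesis by simp
  qed
  have C2: "s y \<ge> b * c * \<bar>y / \<kappa>\<bar> - b * c^2 / 2" if yb: "\<bar>y\<bar> > c * \<kappa>" for y
  proof -
    define w where "w = (if y > 0 then c * \<kappa> else - (c * \<kappa>))"
    have wb: "\<bar>w\<bar> \<le> c * \<kappa>" using cpos by (simp add: w_def)
    obtain g where g: "\<forall>z. s z \<ge> s w + g * (z - w)" "w > 0 \<longrightarrow> g \<ge> q * w" "w < 0 \<longrightarrow> g \<le> q * w"
      using SG[OF wb] by blast
    have sw: "s w \<ge> b * c^2 / 2"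
    proof -
      have "s w \<ge> b / 2 * \<bar>w / \<kappa>\<bar>^2" using C1[OF wb] .
      moreover have "\<bar>w / \<kappa>\<bar>^2 = c^2" using kappa_pos
        by (simp add: w_def power_divide power_mult_distrib)
      ultimately show ?thesis by simp
    qed
    have qck: "q * (c * \<kappa>) = b * c / \<kappa>" using kappa_pos by (simp add: q_def power2_eq_square)
    have gy: "g * (y - w) \<ge> (b * c / \<kappa>) * (\<bar>y\<bar> - c * \<kappa>)"
    proof (cases "y > 0")
      case True
      then have "w = c * \<kappa>" "g \<ge> b * c / \<kappa>" using g(2) cpos qck by (auto simp: w_def)
      moreover have "y - c * \<kappa> \<ge> 0" using True yb by simp
      ultimately have "(b * c / \<kappa>) * (y - c * \<kappa>) \<le> g * (y - w)" using mult_right_mono by metis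
      then show ?thesis using True by simp
    next
      case False
      then have w: "w = - (c * \<kappa>)" by (simp add: w_def)
      then have "g \<le> - (b * c / \<kappa>)" using g(3) cpos qck by simp
      moreover have "y - w \<le> 0" using False yb w by simp
      ultimately have "g * (y - w) \<ge> - (b * c / \<kappa>) * (y - w)" by (rule mult_right_mono_neg)
      moreover have "- (b * c / \<kappa>) * (y - w) = (b * c / \<kappa>) * (\<bar>y\<bar> - c * \<kappa>)"
        using False w kappa_pos by (simp add: abs_of_nonpos field_simps)
      ultimately show ?thesis by linarith
    qed
    have "s y \<ge> b * c^2 / 2 + (b * c / \<kappa>) * (\<bar>y\<bar> - c * \<kappa>)" using g(1) sw gy
      by (smt (verit))
    moreover have "(b * c / \<kappa>) * (\<bar>y\<bar> - c * \<kappa>) = b * c * \<bar>y / \<kappa>\<bar> - b * c^2"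
      using kappa_pos by (simp add: field_simps power2_eq_square)
    ultimately show ?thesis by simp
  qed
  show ?thesis using C1 C2 by blast
qed

end
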